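(* Let $(\mathcal{P},d)$ be a 1-2-metric and $\alpha>0$. Every strategy profile that is a Greedy Equilibrium of the greedy-routing network creation game on $(\mathcal{P},d)$ with edge price $\alpha$ yields a network $G(\mathbf{s})$ that is a Domination Set Graph.
   Context: A 1-2-metric is a finite metric space $(\mathcal{P},d)$ with $d(u,v)\in\{1,2\}$ for all distinct $u,v$; arcs of length 1 (resp. 2) are called 1-edges (resp. 2-edges). Game: the agents are the points of $\mathcal{P}$. A strategy of agent $u$ is $S_u\subseteq\mathcal{P}\setminus\{u\}$; a profile $\mathbf{s}=(S_u)_u$ defines the directed network $G(\mathbf{s})$ on $\mathcal{P}$ with arcs $(u,v)$, $v\in S_u$, of length $d(u,v)$. A greedy path from $u$ to $v$ is a directed path $u=x_1,\dots,x_j=v$ of arcs with $d(x_i,v)>d(x_{i+1},v)$ for all $i$. $\mathrm{stretch}(u,v)$ is the minimum length of a greedy path from $u$ to $v$ divided by $d(u,v)$, or a fixed sufficiently large penalty constant $Z$ if no greedy path exists. The cost of $u$ is $c_u(\mathbf{s})=\sum_{v\ne u}\mathrm{stretch}_{G(\mathbf{s})}(u,v)+\alpha|S_u|$. A profile is a Greedy Equilibrium (GE) if no agent $u$ can strictly decrease $c_u$ by changing $S_u$ through adding one element, deleting one element, or replacing one element by another one (swap), with all other strategies fixed. Notation for a directed network $G$ on $\mathcal{P}$ and node $u$: $N(u)$ is the set of out-neighbours of $u$; $W_1(u)=\{v\in N(u):d(u,v)=1\}$; $W_2(u)=\{v\in N(u):d(u,v)=2\}$; $W_{1\to1}(u)$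 is the set of nodes $w\ne u$ such that there is $v$ with $d(u,v)=d(v,w)=1$ and $(u,v),(v,w)$ arcs of $G$; $W_2^+(u)=W_2(u)\cap W_{1\to1}(u)$. $G^1_{-u}$ is the directed graph on $\mathcal{P}\setminus\{u\}$ having arc $(v,w)$ for every pair with $d(v,w)=1$. A set $D$ of vertices of a directed graph $H$ is dominating if every vertex of $H$ not in $D$ has an in-neighbour in $D$. A Domination Set Graph (DSG) is a directed network $G$ on $\mathcal{P}$ such that (i) $G$ contains every arc $(v,w)$ with $d(v,w)=1$; (ii) for every node $u$, $N(u)$ is dominating in $G^1_{-u}$; (iii) for every node $u$ there is no set $N'\subseteq\mathcal{P}\setminus\{u\}$, obtained from $N(u)$ by deleting one element or by replacing one element by another, such that $N'$ contains all $v$ with $d(u,v)=1$, $N'$ is dominating in $G^1_{-u}$, and $|\{v\in N': d(u,v)=2\}\cap W_{1\to1}(u)|<|W_2^+(u)|$. *)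

theory Defs
  imports Complex_Main
begin

definition one_two_metric :: "'a set \<Rightarrow> ('a \<Rightarrow> 'a \<Rightarrow> real) \<Rightarrow> bool" where
  "one_two_metric P d \<longleftrightarrow> finite P \<and>
     (\<forall>u\<in>P. d u u = 0) \<and>
     (\<forall>u\<in>P. \<forall>v\<in>P. d u v = d v u) \<and>
     (\<forall>u\<in>P. \<forall>v\<in>P. u \<noteq> v \<longrightarrow> d u v \<in> {1, 2})"

text \<open>A strategy profile: agent u buys arcs to S u, a subset of P without u.
  The network G(s) has the arc (u,v) iff v is in s u.\<close>
definition strategy_profile :: "'a set \<Rightarrow> ('a \<Rightarrow> 'a set) \<Rightarrow> bool" where
  "strategy_profile P s \<longleftrightarrow> (\<forall>u\<in>P. s u \<subseteq> P - {u})"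

definition greedy_path ::
  "'a set \<Rightarrow> ('a \<Rightarrow> 'a \<Rightarrow> real) \<Rightarrow> ('a \<Rightarrow> 'a set) \<Rightarrow> 'a \<Rightarrow> 'a \<Rightarrow> 'a list \<Rightarrow> bool" where
  "greedy_path P d s u v xs \<longleftrightarrow> xs \<noteq> [] \<and> hd xs = u \<and> last xs = v \<and> set xs \<subseteq> P \<and>
     (\<forall>i. i + 1 < length xs \<longrightarrow>
        xs ! (i + 1) \<in> s (xs ! i) \<and> d (xs ! i) v > d (xs ! (i + 1)) v)"

definition path_len :: "('a \<Rightarrow> 'a \<Rightarrow> real) \<Rightarrow> 'a list \<Rightarrow> real" where
  "path_len d xs = (\<Sum>i<length xs - 1. d (xs ! i) (xs ! (i + 1)))"

definition stretch ::
  "'a set \<Rightarrow> ('a \<Rightarrow> 'a \<Rightarrow> real) \<Rightarrow> real \<Rightarrow> ('a \<Rightarrow> 'a set) \<Rightarrow> 'a \<Rightarrow> 'a \<Rightarrow> real" where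
  "stretch P d Z s u v =
     (if (\<exists>xs. greedy_path P d s u v xs)
      then Min {path_len d xs | xs. greedy_path P d s u v xs} / d u v
      else Z)"

definition cost ::
  "'a set \<Rightarrow> ('a \<Rightarrow> 'a \<Rightarrow> real) \<Rightarrow> real \<Rightarrow> real \<Rightarrow> ('a \<Rightarrow> 'a set) \<Rightarrow> 'a \<Rightarrow> real" where
  "cost P d Z \<alpha> s u = (\<Sum>v\<in>P - {u}. stretch P d Z s u v) + \<alpha> * real (card (s u))"

definition single_change :: "'a set \<Rightarrow> 'a \<Rightarrow> 'a set \<Rightarrow> 'a set \<Rightarrow> bool" where
  "single_change P u S S' \<longleftrightarrow>
     (\<exists>w\<in>P - {u} - S. S' = insert w S) \<or>
     (\<exists>w\<in>S. S' = S - {w}) \<or>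
     (\<exists>w\<in>S. \<exists>w'\<in>P - {u} - S. S' = insert w' (S - {w}))"

definition greedy_equilibrium ::
  "'a set \<Rightarrow> ('a \<Rightarrow> 'a \<Rightarrow> real) \<Rightarrow> real \<Rightarrow> real \<Rightarrow> ('a \<Rightarrow> 'a set) \<Rightarrow> bool" where
  "greedy_equilibrium P d Z \<alpha> s \<longleftrightarrow> strategy_profile P s \<and>
     (\<forall>u\<in>P. \<forall>S'. single_change P u (s u) S' \<longrightarrow>
        cost P d Z \<alpha> s u \<le> cost P d Z \<alpha> (s(u := S')) u)"

definition W11 :: "'a set \<Rightarrow> ('a \<Rightarrow> 'a \<Rightarrow> real) \<Rightarrow> ('a \<Rightarrow> 'a set) \<Rightarrow> 'a \<Rightarrow> 'a set" where
  "W11 P d N u = {w\<in>P. w \<noteq> u \<and> (\<exists>v\<in>P. d u v = 1 \<and> d v w = 1 \<and> v \<in> N u \<and> w \<in> N v)}"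

definition W2 :: "('a \<Rightarrow> 'a \<Rightarrow> real) \<Rightarrow> ('a \<Rightarrow> 'a set) \<Rightarrow> 'a \<Rightarrow> 'a set" where
  "W2 d N u = {v\<in>N u. d u v = 2}"

definition W2plus :: "'a set \<Rightarrow> ('a \<Rightarrow> 'a \<Rightarrow> real) \<Rightarrow> ('a \<Rightarrow> 'a set) \<Rightarrow> 'a \<Rightarrow> 'a set" where
  "W2plus P d N u = W2 d N u \<inter> W11 P d N u"

text \<open>D is dominating in G1 minus u: the digraph on P - {u} with all 1-arcs.\<close>
definition dominating_minus :: "'a set \<Rightarrow> ('a \<Rightarrow> 'a \<Rightarrow> real) \<Rightarrow> 'a \<Rightarrow> 'a set \<Rightarrow> bool" where
  "dominating_minus P d u D \<longleftrightarrow> D \<subseteq> P - {u} \<and>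
     (\<forall>x\<in>P - {u} - D. \<exists>y\<in>D. d y x = 1)"

definition DSG :: "'a set \<Rightarrow> ('a \<Rightarrow> 'a \<Rightarrow> real) \<Rightarrow> ('a \<Rightarrow> 'a set) \<Rightarrow> bool" where
  "DSG P d N \<longleftrightarrow>
     (\<forall>v\<in>P. \<forall>w\<in>P. d v w = 1 \<longrightarrow> w \<in> N v) \<and>
     (\<forall>u\<in>P. dominating_minus P d u (N u)) \<and>
     (\<forall>u\<in>P. \<not> (\<exists>N'. N' \<subseteq> P - {u} \<and>
        ((\<exists>w\<in>N u. N' = N u - {w}) \<or>
         (\<exists>w\<in>N u. \<exists>w'\<in>P - {u} - N u. N' = insert w' (N u - {w}))) \<and>
        {v\<in>P. d u v = 1 \<and> v \<noteq> u} \<subseteq> N' \<and>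
        dominating_minus P d u N' \<and>
        card ({v\<in>N'. d u v = 2} \<inter> W11 P d N u) < card (W2plus P d N u)))"

end

theory Submission
  imports Defs
begin

lemma otm_facts:
  assumes "one_two_metric P d"
  shows "finite P" "\<And>u. u\<in>P \<Longrightarrow> d u u = 0"
    "\<And>u v. u\<in>P \<Longrightarrow> v\<in>P \<Longrightarrow> d u v = d v u"
    "\<And>u v. u\<in>P \<Longrightarrow> v\<in>P \<Longrightarrow> u \<noteq> v \<Longrightarrow> d u v = 1 \<or> d u v = 2"
  using assms unfolding one_two_metric_def by auto

lemma path_len2: "path_len d [a,b] = d a b"
  by (simp add: path_len_def)

lemma path_len3: "path_len d [a,b,c] = d a b + d b c"
  by (simp add: path_len_def numeral_eq_Suc lessThan_Suc)

lemma four_chain: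
  fixes a b c e :: real
  assumes "a = 0 \<or> a = 1 \<or> a = 2" "b = 0 \<or> b = 1 \<or> b = 2" "c = 0 \<or> c = 1 \<or> c = 2"
    "e = 0 \<or> e = 1 \<or> e = 2" "a > b" "b > c" "c > e"
  shows False
  using assms by auto

lemma gp_char:
  assumes M: "one_two_metric P d" and u: "u\<in>P" and v: "v\<in>P" and uv: "u\<noteq>v"
  shows "greedy_path P d t u v xs \<longleftrightarrow>
    (xs = [u,v] \<and> v \<in> t u) \<or>
    (\<exists>x\<in>P. xs = [u,x,v] \<and> x \<in> t u \<and> v \<in> t x \<and> d x v < d u v \<and> 0 < d x v)"
proof
  assume g: "greedy_path P d t u v xs"
  have ne: "xs \<noteq> []" and h: "hd xs = u" and l: "last xs = v" and sP: "set xs \<subseteq> P"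
    and st: "\<And>i. i + 1 < length xs \<Longrightarrow> xs ! (i + 1) \<in> t (xs ! i) \<and> d (xs ! i) v > d (xs ! (i + 1)) v"
    using g unfolding greedy_path_def by auto
  have vals: "d (xs!i) v = 0 \<or> d (xs!i) v = 1 \<or> d (xs!i) v = 2" if "i < length xs" for i
  proof -
    have "xs!i \<in> P" using sP that nth_mem by blast
    then show ?thesis using otm_facts[OF M] v by (cases "xs!i = v") auto
  qed
  have "length xs \<ge> 1" using ne by (cases xs) auto
  then consider "length xs = 1" | "length xs = 2" | "length xs = 3" | "length xs \<ge> 4" by linarith
  then show "(xs = [u,v] \<and> v \<in> t u) \<or> (\<exists>x\<in>P. xs = [u,x,v] \<and> x \<in> t u \<and> v \<in> t x \<and> d x v < d u v \<and> 0 < d x v)"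
  proof cases
    case 1
    then obtain a where "xs = [a]" by (auto simp: length_Suc_conv)
    then show ?thesis using h l uv by simp
  next
    case 2
    then obtain a b where xs: "xs = [a,b]" by (auto simp: length_Suc_conv numeral_eq_Suc)
    then have "a = u" "b = v" using h l by auto
    moreover have "b \<in> t a" using st[of 0] xs by simp
    ultimately show ?thesis using xs by simp
  next
    case 3
    then obtain a b c where xs: "xs = [a,b,c]" by (auto simp: length_Suc_conv numeral_eq_Suc)
    then have "a = u" "c = v" using h l by auto
    moreover have "b \<in> t a" "d a v > d b v" using st[of 0] xs by simp_all
    moreover have "c \<in> t b" "d b v > d c v" using st[of 1] xs by simp_all
    moreover have "b \<in> P" using sP xs by simp
    moreover have "d v v = 0" using otm_facts(2)[OF M v] .
    ultimately show ?thesis using xs by auto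
  next
    case 4
    have l0: "0 < length xs" and l1: "1 < length xs" and l2: "2 < length xs" and l3: "3 < length xs"
      using 4 by linarith+
    have "d (xs!0) v > d (xs!1) v" using st[of 0] 4 by simp
    moreover have "d (xs!1) v > d (xs!2) v" using st[of 1] 4 by (simp add: numeral_2_eq_2)
    moreover have "d (xs!2) v > d (xs!3) v" using st[of 2] 4 by (simp add: numeral_2_eq_2 numeral_3_eq_3)
    ultimately have False using four_chain[OF vals[OF l0] vals[OF l1] vals[OF l2] vals[OF l3]] by simp
    then show ?thesis ..
  qed
next
  assume A: "(xs = [u,v] \<and> v \<in> t u) \<or>
    (\<exists>x\<in>P. xs = [u,x,v] \<and> x \<in> t u \<and> v \<in> t x \<and> d x v < d u v \<and> 0 < d x v)"
  have "d u v = 1 \<or> d u v = 2" using otm_facts(4)[OF M u v uv] .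
  then have duv: "d u v > 0" "d v v = 0" using otm_facts(2)[OF M v] by auto
  from A show "greedy_path P d t u v xs"
  proof
    assume "xs = [u,v] \<and> v \<in> t u"
    then show ?thesis using u v duv unfolding greedy_path_def by auto
  next
    assume "\<exists>x\<in>P. xs = [u,x,v] \<and> x \<in> t u \<and> v \<in> t x \<and> d x v < d u v \<and> 0 < d x v"
    then obtain x where x: "x \<in> P" "xs = [u,x,v]" "x \<in> t u" "v \<in> t x" "d x v < d u v" "0 < d x v"
      by blast
    have "\<forall>i. i + 1 < length xs \<longrightarrow> xs ! (i + 1) \<in> t (xs ! i) \<and> d (xs ! i) v > d (xs ! (i + 1)) v"
    proof (intro allI impI)
      fix i assume "i + 1 < length xs"
      then have "i = 0 \<or> i = 1" using x by auto
      then show "xs ! (i + 1) \<in> t (xs ! i) \<and> d (xs ! i) v > d (xs ! (i + 1)) v"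
        using x duv by auto
    qed
    then show ?thesis using x u v unfolding greedy_path_def by auto
  qed
qed

lemma stretch_formula:
  assumes M: "one_two_metric P d" and u: "u\<in>P" and v: "v\<in>P" and uv: "u\<noteq>v"
  shows "stretch P d Z t u v =
    (if v \<in> t u then 1
     else if d u v = 2 \<and> (\<exists>y\<in>P. y \<in> t u \<and> d u y = 1 \<and> d y v = 1 \<and> v \<in> t y) then 1
     else if d u v = 2 \<and> (\<exists>y\<in>P. y \<in> t u \<and> d y v = 1 \<and> v \<in> t y) then 3/2
     else Z)"
proof -
  let ?L = "{path_len d xs |xs. greedy_path P d t u v xs}"
  note gc = gp_char[OF M u v uv, of t]
  have dvv: "d v v = 0" using otm_facts(2)[OF M v] .
  have d12: "\<And>x y. x\<in>P \<Longrightarrow> y\<in>P \<Longrightarrow> x \<noteq> y \<Longrightarrow> d x y = 1 \<or> d x y = 2"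
    using otm_facts(4)[OF M] by blast
  have duv12: "d u v = 1 \<or> d u v = 2" using d12 u v uv by blast
  have Lcases: "(l = d u v \<and> v \<in> t u) \<or> (\<exists>x\<in>P. l = d u x + d x v \<and> x \<in> t u \<and> v \<in> t x \<and> d x v < d u v \<and> 0 < d x v)"
    if "l \<in> ?L" for l
  proof -
    from that obtain xs where l: "l = path_len d xs" and g: "greedy_path P d t u v xs" by blast
    from g[unfolded gc] show ?thesis
    proof
      assume "xs = [u, v] \<and> v \<in> t u" then show ?thesis using l path_len2 by auto
    next
      assume "\<exists>x\<in>P. xs = [u, x, v] \<and> x \<in> t u \<and> v \<in> t x \<and> d x v < d u v \<and> 0 < d x v"
      then obtain x where x: "x\<in>P" "xs = [u, x, v]" "x \<in> t u" "v \<in> t x" "d x v < d u v" "0 < d x v"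
        by blast
      have "l = d u x + d x v" using l x(2) path_len3 by simp
      then show ?thesis using x by blast
    qed
  qed
  have Lsub: "?L \<subseteq> insert (d u v) ((\<lambda>x. d u x + d x v) ` P)"
    using Lcases by blast
  have finL: "finite ?L" using finite_subset[OF Lsub] otm_facts(1)[OF M] by auto
  have inL2: "d u v \<in> ?L" if "v \<in> t u"
  proof -
    have "greedy_path P d t u v [u,v]" using gc that by simp
    then show ?thesis by (intro CollectI exI[of _ "[u,v]"]) (simp add: path_len2)
  qed
  have inL3: "d u x + d x v \<in> ?L" if "x\<in>P" "x \<in> t u" "v \<in> t x" "d x v < d u v" "0 < d x v" for x
  proof -
    have "greedy_path P d t u v [u,x,v]" using gc that by auto
    then show ?thesis by (intro CollectI exI[of _ "[u,x,v]"]) (simp add: path_len3)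
  qed
  have mid: "d x v = 1 \<and> d u v = 2 \<and> (d u x = 1 \<or> d u x = 2)"
    if "x\<in>P" "d x v < d u v" "0 < d x v" for x
  proof -
    have "x \<noteq> u" using that by auto
    moreover have "x \<noteq> v" using that dvv by auto
    ultimately have "d x v = 1 \<or> d x v = 2" "d u x = 1 \<or> d u x = 2" using d12 that u v by blast+
    then show ?thesis using that duv12 by auto
  qed
  show ?thesis
  proof (cases "v \<in> t u")
    case True
    have "Min ?L = d u v"
    proof (rule Min_eqI[OF finL])
      fix l assume "l \<in> ?L"
      then show "l \<ge> d u v" using Lcases[of l] mid by fastforce
    next
      show "d u v \<in> ?L" using inL2 True .
    qed
    moreover have "d u v \<noteq> 0" using duv12 by auto
    ultimately show ?thesis using True inL2 unfolding stretch_def by auto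
  next
    case nT: False
    show ?thesis
    proof (cases "d u v = 2 \<and> (\<exists>y\<in>P. y \<in> t u \<and> d u y = 1 \<and> d y v = 1 \<and> v \<in> t y)")
      case True
      then obtain y where y: "d u v = 2" "y\<in>P" "y \<in> t u" "d u y = 1" "d y v = 1" "v \<in> t y" by blast
      have yL: "2 \<in> ?L" using inL3[of y] y by auto
      have "Min ?L = 2"
      proof (rule Min_eqI[OF finL])
        fix l assume "l \<in> ?L"
        then show "l \<ge> 2" using Lcases[of l] mid nT by fastforce
      next
        show "2 \<in> ?L" using yL .
      qed
      then show ?thesis using True nT yL y(1) unfolding stretch_def by auto
    next
      case nC2: False
      show ?thesis
      proof (cases "d u v = 2 \<and> (\<exists>y\<in>P. y \<in> t u \<and> d y v = 1 \<and> v \<in> t y)")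
        case True
        then obtain y where y: "d u v = 2" "y\<in>P" "y \<in> t u" "d y v = 1" "v \<in> t y" by blast
        have "d u y = 1 \<or> d u y = 2" using mid[of y] y by auto
        then have "d u y = 2" using nC2 y by auto
        then have yL: "3 \<in> ?L" using inL3[of y] y by auto
        have "Min ?L = 3"
        proof (rule Min_eqI[OF finL])
          fix l assume "l \<in> ?L"
          then obtain x where x: "x\<in>P" "l = d u x + d x v" "x \<in> t u" "v \<in> t x" "d x v < d u v" "0 < d x v"
            using Lcases[of l] nT by blast
          have "d x v = 1" "d u x = 1 \<or> d u x = 2" using mid[OF x(1) x(5) x(6)] by auto
          moreover have "d u x \<noteq> 1" using nC2 x y(1) \<open>d x v = 1\<close> by auto
          ultimately show "l \<ge> 3" using x(2) by auto
        next
          show "3 \<in> ?L" using yL .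
        qed
        then show ?thesis using True nT nC2 yL y(1) unfolding stretch_def by auto
      next
        case nC3: False
        have "\<not> (\<exists>xs. greedy_path P d t u v xs)"
        proof
          assume "\<exists>xs. greedy_path P d t u v xs"
          then obtain xs where "greedy_path P d t u v xs" by blast
          then have "path_len d xs \<in> ?L" by blast
          then obtain x where x: "x\<in>P" "x \<in> t u" "v \<in> t x" "d x v < d u v" "0 < d x v"
            using Lcases nT by blast
          then show False using mid[OF x(1) x(4) x(5)] nC3 by auto
        qed
        then show ?thesis using nT nC2 nC3 unfolding stretch_def by auto
      qed
    qed
  qed
qed

lemma stretch_mono:
  assumes M: "one_two_metric P d" and u: "u\<in>P" and v: "v\<in>P" and uv: "u\<noteq>v"
    and sub: "t u \<subseteq> t' u" and oth: "\<And>y. y \<noteq> u \<Longrightarrow> t' y = t y" and Z: "Z \<ge> 3/2"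
  shows "stretch P d Z t' u v \<le> stretch P d Z t u v"
proof -
  have duu: "d u u = 0" using otm_facts(2)[OF M u] .
  have c2: "(\<exists>y\<in>P. y \<in> t' u \<and> d u y = 1 \<and> d y v = 1 \<and> v \<in> t' y)"
    if "(\<exists>y\<in>P. y \<in> t u \<and> d u y = 1 \<and> d y v = 1 \<and> v \<in> t y)"
  proof -
    from that obtain y where y: "y\<in>P" "y \<in> t u" "d u y = 1" "d y v = 1" "v \<in> t y" by blast
    then have "y \<noteq> u" using duu by auto
    then show ?thesis using y sub oth[of y] by blast
  qed
  have c3: "(\<exists>y\<in>P. y \<in> t' u \<and> d y v = 1 \<and> v \<in> t' y)"
    if "d u v = 2" "(\<exists>y\<in>P. y \<in> t u \<and> d y v = 1 \<and> v \<in> t y)"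
  proof -
    from that obtain y where y: "y\<in>P" "y \<in> t u" "d y v = 1" "v \<in> t y" by blast
    then have "y \<noteq> u" using that(1) by auto
    then show ?thesis using y sub oth[of y] by blast
  qed
  show ?thesis
    apply (simp only: stretch_formula[OF M u v uv])
    using sub c2 c3 Z by auto
qed

theorem lemma2p5:
  fixes P :: "'a set" and d :: "'a \<Rightarrow> 'a \<Rightarrow> real" and \<alpha> :: real
  assumes "one_two_metric P d" and "\<alpha> > 0"
  shows "\<exists>Z0. \<forall>Z \<ge> Z0. \<forall>s. greedy_equilibrium P d Z \<alpha> s \<longrightarrow> DSG P d s"
proof (intro exI[of _ "2 + \<alpha>"] allI impI)
  fix Z s assume Z: "Z \<ge> 2 + \<alpha>" and GE: "greedy_equilibrium P d Z \<alpha> s"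
  note M = assms(1)
  have fin: "finite P" using otm_facts(1)[OF M] .
  have SP: "\<And>u. u\<in>P \<Longrightarrow> s u \<subseteq> P - {u}"
    using GE unfolding greedy_equilibrium_def strategy_profile_def by auto
  have GEc: "\<And>u S'. u\<in>P \<Longrightarrow> single_change P u (s u) S' \<Longrightarrow> cost P d Z \<alpha> s u \<le> cost P d Z \<alpha> (s(u := S')) u"
    using GE unfolding greedy_equilibrium_def by auto
  have d12: "\<And>x y. x\<in>P \<Longrightarrow> y\<in>P \<Longrightarrow> x \<noteq> y \<Longrightarrow> d x y = 1 \<or> d x y = 2"
    using otm_facts(4)[OF M] by blast
  have duu: "\<And>x. x \<in> P \<Longrightarrow> d x x = 0" using otm_facts(2)[OF M] by blast
  have Z32: "Z \<ge> 3/2" using Z assms(2) by simp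
  have noZ: False if u: "u\<in>P" and x: "x\<in>P" "x\<noteq>u" and sZ: "stretch P d Z s u x = Z" for u x
  proof -
    have xn: "x \<notin> s u"
      using sZ stretch_formula[OF M u x(1) x(2)[symmetric], of Z s] Z assms(2) by auto
    define S' where "S' = insert x (s u)"
    define s' where "s' = s(u := S')"
    have sc: "single_change P u (s u) S'" unfolding single_change_def S'_def using x xn by auto
    have le: "stretch P d Z s' u y \<le> stretch P d Z s u y" if "y \<in> P - {u}" for y
      using stretch_mono[OF M u, of y s s' Z] that Z32 unfolding s'_def S'_def by auto
    have one: "stretch P d Z s' u x = 1"
      using stretch_formula[OF M u x(1) x(2)[symmetric], of Z s'] unfolding s'_def S'_def by simp
    have fsu: "finite (s u)" using SP[OF u] fin finite_subset by blast
    have cardS': "card (s' u) = card (s u) + 1" unfolding s'_def S'_def using fsu xn by simp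
    have xin: "x \<in> P - {u}" using x by simp
    have e1: "(\<Sum>y\<in>P - {u}. stretch P d Z s' u y) = stretch P d Z s' u x + (\<Sum>y\<in>P - {u} - {x}. stretch P d Z s' u y)"
      using sum.remove[OF _ xin] fin by auto
    have e2: "(\<Sum>y\<in>P - {u} - {x}. stretch P d Z s' u y) \<le> (\<Sum>y\<in>P - {u} - {x}. stretch P d Z s u y)"
      using le by (auto intro: sum_mono)
    have e3: "(\<Sum>y\<in>P - {u}. stretch P d Z s u y) = Z + (\<Sum>y\<in>P - {u} - {x}. stretch P d Z s u y)"
      using sum.remove[OF _ xin, of "stretch P d Z s u"] fin sZ by auto
    have "cost P d Z \<alpha> s' u \<le> cost P d Z \<alpha> s u + 1 - Z + \<alpha>"
      unfolding cost_def cardS' using e1 e2 e3 one by (simp add: algebra_simps)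
    moreover have "cost P d Z \<alpha> s u \<le> cost P d Z \<alpha> s' u" using GEc[OF u sc] unfolding s'_def .
    ultimately show False using Z by linarith
  qed
  have D1: "w \<in> s v" if vw: "v\<in>P" "w\<in>P" "d v w = 1" for v w
  proof (rule ccontr)
    assume n: "w \<notin> s v"
    have vw': "v \<noteq> w" using vw duu by auto
    have "stretch P d Z s v w = Z" using stretch_formula[OF M vw(1) vw(2) vw', of Z s] n vw(3) by auto
    then show False using noZ[OF vw(1) vw(2)] vw' by auto
  qed
  have D2: "dominating_minus P d u (s u)" if u: "u\<in>P" for u
    unfolding dominating_minus_def
  proof (intro conjI ballI)
    show "s u \<subseteq> P - {u}" using SP[OF u] .
    fix x assume x: "x \<in> P - {u} - s u"
    show "\<exists>y\<in>s u. d y x = 1"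
    proof (rule ccontr)
      assume n: "\<not> (\<exists>y\<in>s u. d y x = 1)"
      have "x \<noteq> u" using x by simp
      have "stretch P d Z s u x = Z"
        using stretch_formula[OF M u _ \<open>x \<noteq> u\<close>[symmetric], of Z s] x n by auto
      then show False using noZ[OF u _ \<open>x \<noteq> u\<close>] x by auto
    qed
  qed
  show "DSG P d s"
    unfolding DSG_def
  proof (intro conjI ballI impI)
    show "\<And>v w. v\<in>P \<Longrightarrow> w\<in>P \<Longrightarrow> d v w = 1 \<Longrightarrow> w \<in> s v" using D1 by blast
    show "\<And>u. u\<in>P \<Longrightarrow> dominating_minus P d u (s u)" using D2 by blast
  next
    fix u assume u: "u \<in> P"
    show "\<not> (\<exists>N'. N' \<subseteq> P - {u} \<and>
        ((\<exists>w\<in>s u. N' = s u - {w}) \<or>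
         (\<exists>w\<in>s u. \<exists>w'\<in>P - {u} - s u. N' = insert w' (s u - {w}))) \<and>
        {v\<in>P. d u v = 1 \<and> v \<noteq> u} \<subseteq> N' \<and>
        dominating_minus P d u N' \<and>
        card ({v\<in>N'. d u v = 2} \<inter> W11 P d s u) < card (W2plus P d s u))"
    proof
      assume "\<exists>N'. N' \<subseteq> P - {u} \<and>
        ((\<exists>w\<in>s u. N' = s u - {w}) \<or>
         (\<exists>w\<in>s u. \<exists>w'\<in>P - {u} - s u. N' = insert w' (s u - {w}))) \<and>
        {v\<in>P. d u v = 1 \<and> v \<noteq> u} \<subseteq> N' \<and>
        dominating_minus P d u N' \<and>
        card ({v\<in>N'. d u v = 2} \<inter> W11 P d s u) < card (W2plus P d s u)"
      then obtain N' where NP: "N' \<subseteq> P - {u}"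
        and ch: "(\<exists>w\<in>s u. N' = s u - {w}) \<or>
         (\<exists>w\<in>s u. \<exists>w'\<in>P - {u} - s u. N' = insert w' (s u - {w}))"
        and N1: "{v\<in>P. d u v = 1 \<and> v \<noteq> u} \<subseteq> N'"
        and ND: "dominating_minus P d u N'"
        and cd: "card ({v\<in>N'. d u v = 2} \<inter> W11 P d s u) < card (W2plus P d s u)"
        by (elim exE conjE) (rule that)
      define D11 where "D11 = {x. \<exists>y\<in>P. d u y = 1 \<and> d y x = 1}"
      define g where "g = (\<lambda>T x. if d u x = 1 then 1 else if x \<in> T \<or> x \<in> D11 then 1 else (3/2::real))"
      have gf: "stretch P d Z t u x = g T x"
        if x: "x\<in>P" "x\<noteq>u" and tT: "t u = T" and TP: "T \<subseteq> P-{u}"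
          and T1: "\<forall>v\<in>P. d u v = 1 \<longrightarrow> v \<in> T" and TD: "dominating_minus P d u T"
          and ts: "\<forall>y. y\<noteq>u \<longrightarrow> t y = s y" for t T x
      proof -
        note sf = stretch_formula[OF M u x(1) x(2)[symmetric], of Z t]
        have "d u x = 1 \<or> d u x = 2" using d12 u x by metis
        then show ?thesis
        proof
          assume "d u x = 1"
          then show ?thesis using sf T1 x tT unfolding g_def by auto
        next
          assume d2: "d u x = 2"
          show ?thesis
          proof (cases "x \<in> T")
            case True then show ?thesis using sf tT d2 unfolding g_def by auto
          next
            case nT: False
            show ?thesis
            proof (cases "x \<in> D11")
              case True
              then obtain y where y: "y\<in>P" "d u y = 1" "d y x = 1" unfolding D11_def by blast
              have "y \<noteq> u" using y duu[OF u] by auto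
              then have "y \<in> t u" "x \<in> t y" using T1 y tT ts D1[OF y(1) x(1) y(3)] by auto
              then have "\<exists>y\<in>P. y \<in> t u \<and> d u y = 1 \<and> d y x = 1 \<and> x \<in> t y" using y by blast
              then show ?thesis using sf tT d2 nT True unfolding g_def by auto
            next
              case nD: False
              have c2: "\<not> (\<exists>y\<in>P. y \<in> t u \<and> d u y = 1 \<and> d y x = 1 \<and> x \<in> t y)"
                using nD unfolding D11_def by blast
              obtain y where y: "y \<in> T" "d y x = 1" using TD nT x unfolding dominating_minus_def by blast
              have yP: "y \<in> P" "y \<noteq> u" using y TP by auto
              then have "x \<in> t y" using ts D1[OF yP(1) x(1) y(2)] by auto
              then have c3: "\<exists>y\<in>P. y \<in> t u \<and> d y x = 1 \<and> x \<in> t y" using y yP tT by blast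
              show ?thesis using sf tT d2 nT nD c2 c3 unfolding g_def by auto
            qed
          qed
        qed
      qed
      have W11D: "x \<in> W11 P d s u \<longleftrightarrow> x \<in> D11" if "x \<in> P - {u}" for x
      proof
        assume "x \<in> W11 P d s u" then show "x \<in> D11" unfolding W11_def D11_def by blast
      next
        assume "x \<in> D11"
        then obtain y where y: "y\<in>P" "d u y = 1" "d y x = 1" unfolding D11_def by blast
        then show "x \<in> W11 P d s u" using that D1[OF u y(1) y(2)] D1[OF y(1) _ y(3)] unfolding W11_def by auto
      qed
      define s' where "s' = s(u := N')"
      have sfs: "stretch P d Z s u x = g (s u) x" if "x \<in> P - {u}" for x
        using gf[of x s "s u"] that SP[OF u] D1[OF u] D2[OF u] by auto
      have sfs': "stretch P d Z s' u x = g N' x" if "x \<in> P - {u}" for x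
      proof -
        have N1': "\<forall>v\<in>P. d u v = 1 \<longrightarrow> v \<in> N'" using N1 duu[OF u] by auto
        show ?thesis using gf[of x s' N', OF _ _ _ NP N1' ND] that unfolding s'_def by auto
      qed
      have cs: "cost P d Z \<alpha> s u = (\<Sum>x\<in>P - {u}. g (s u) x) + \<alpha> * real (card (s u))"
        unfolding cost_def using sfs by simp
      have cs': "cost P d Z \<alpha> s' u = (\<Sum>x\<in>P - {u}. g N' x) + \<alpha> * real (card N')"
        unfolding cost_def using sfs' by (simp add: s'_def)
      have fsu: "finite (s u)" using SP[OF u] fin finite_subset by blast
      let ?A = "W2plus P d s u"
      let ?A' = "{v\<in>N'. d u v = 2} \<inter> W11 P d s u"
      have finA': "finite ?A'" using NP fin finite_subset[of ?A' P] by auto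
      have finA: "finite ?A" using fsu unfolding W2plus_def W2_def by auto
      have "cost P d Z \<alpha> s' u < cost P d Z \<alpha> s u"
      proof -
        from ch show ?thesis
        proof
          assume "\<exists>w\<in>s u. N' = s u - {w}"
          then obtain w where w: "w \<in> s u" "N' = s u - {w}" by blast
          have wP: "w \<in> P - {u}" using w SP[OF u] by auto
          have "d u w \<noteq> 1" using N1 w wP by auto
          then have dw: "d u w = 2" using d12 u wP by force
          have AA: "?A' = ?A - {w}" unfolding W2plus_def W2_def w(2) by auto
          have "w \<in> ?A"
          proof (rule ccontr)
            assume "w \<notin> ?A" then have "?A' = ?A" using AA by auto
            then show False using cd by simp
          qed
          then have wD: "w \<in> D11" using W11D[OF wP] unfolding W2plus_def by auto
          have "(\<Sum>x\<in>P - {u}. g N' x) = (\<Sum>x\<in>P - {u}. g (s u) x)"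
            by (rule sum.cong) (use w dw wD in \<open>auto simp: g_def\<close>)
          moreover have "card N' = card (s u) - 1" using w fsu by simp
          moreover have "card (s u) \<ge> 1" using w fsu card_0_eq[of "s u"] by (cases "card (s u)") auto
          ultimately show ?thesis using cs cs' assms(2) by (simp add: of_nat_diff)
        next
          assume "\<exists>w\<in>s u. \<exists>w'\<in>P - {u} - s u. N' = insert w' (s u - {w})"
          then obtain w w' where w: "w \<in> s u" "w' \<in> P - {u} - s u" "N' = insert w' (s u - {w})" by blast
          have wP: "w \<in> P - {u}" using w SP[OF u] by auto
          have ww: "w \<noteq> w'" using w by auto
          have "d u w \<noteq> 1" using N1 w wP ww by auto
          then have dw: "d u w = 2" using d12 u wP by force
          have "d u w' \<noteq> 1" using D1[OF u, of w'] w by auto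
          moreover have "d u w' = 1 \<or> d u w' = 2" using d12[OF u, of w'] w by auto
          ultimately have dw': "d u w' = 2" by simp
          have wW: "w \<in> W11 P d s u"
          proof (rule ccontr)
            assume n: "w \<notin> W11 P d s u"
            have "?A \<subseteq> ?A'" using n unfolding W2plus_def W2_def w(3) by auto
            then have "card ?A \<le> card ?A'" using card_mono[OF finA'] by blast
            then show False using cd by simp
          qed
          have wW': "w' \<notin> W11 P d s u"
          proof
            assume n: "w' \<in> W11 P d s u"
            have "insert w' (?A - {w}) \<subseteq> ?A'" using n dw' unfolding W2plus_def W2_def w(3) by auto
            then have "card (insert w' (?A - {w})) \<le> card ?A'" using card_mono[OF finA'] by blast
            moreover have "card (insert w' (?A - {w})) = Suc (card (?A - {w}))"
              using finA w(2) unfolding W2plus_def W2_def by (intro card_insert_disjoint) auto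
            moreover have "card ?A \<le> Suc (card (?A - {w}))"
            proof (cases "w \<in> ?A")
              case True then show ?thesis using card_Suc_Diff1[OF finA True] by simp
            next
              case False then show ?thesis by simp
            qed
            ultimately show False using cd by linarith
          qed
          have w'P: "w' \<in> P - {u}" using w by auto
          have wD: "w \<in> D11" using W11D[OF wP] wW by auto
          have wD': "w' \<notin> D11" using W11D[OF w'P] wW' by auto
          have r: "(\<Sum>x\<in>P - {u} - {w'}. g N' x) = (\<Sum>x\<in>P - {u} - {w'}. g (s u) x)"
            by (rule sum.cong) (use w dw wD in \<open>auto simp: g_def\<close>)
          have e1: "(\<Sum>x\<in>P - {u}. g N' x) = g N' w' + (\<Sum>x\<in>P - {u} - {w'}. g N' x)"
            using sum.remove[OF _ w'P] fin by auto
          have e2: "(\<Sum>x\<in>P - {u}. g (s u) x) = g (s u) w' + (\<Sum>x\<in>P - {u} - {w'}. g (s u) x)"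
            using sum.remove[OF _ w'P] fin by auto
          have g1: "g N' w' = 1" using w unfolding g_def by auto
          have g2: "g (s u) w' = 3/2" using w dw' wD' unfolding g_def by auto
          have "card N' = Suc (card (s u - {w}))" using w fsu by (simp add: card_insert_disjoint)
          also have "\<dots> = card (s u)" using card_Suc_Diff1[OF fsu w(1)] .
          finally have "card N' = card (s u)" .
          then show ?thesis using cs cs' e1 e2 r g1 g2 by simp
        qed
      qed
      moreover have "single_change P u (s u) N'" using ch unfolding single_change_def by blast
      then have "cost P d Z \<alpha> s u \<le> cost P d Z \<alpha> s' u" using GEc[OF u] unfolding s'_def by blast
      ultimately show False by linarith
    qed
  qed
qed

end
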